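(* Let $\sigma$ be a finite relational signature and $n\le k$ positive integers. Then $(\mathbb{H}_{n,k},\epsilon^{n,k},\delta^{n,k})$ is a comonad on the category $\mathcal{R}(\sigma)$ of $\sigma$-structures and homomorphisms.
   Context: For $m\in\mathbb{N}$, $[m]=\{1,\dots,m\}$. For a $\sigma$-structure $\mathcal{A}$, $\mathbb{T}_k\mathcal{A}$ is the $\sigma$-structure whose universe is the set of nonempty finite lists over $A\times[k]$; $\epsilon_{\mathcal{A}}(s)$ is the first component of the last pair of $s$; a tuple $(s_1,\dots,s_r)$ is in $R^{\mathbb{T}_k\mathcal{A}}$ iff the $s_i$ are pairwise comparable in the prefix order, $(\epsilon_{\mathcal{A}}(s_1),\dots,\epsilon_{\mathcal{A}}(s_r))\in R^{\mathcal{A}}$, and whenever $s_i$ is a prefix of $s_j$ and $s_i$ ends with a pair $(a,p)$, no prefix of $s_j$ properly extending $s_i$ ends with a pair $(a',p)$ for any $a'\in A$. For a homomorphism $f$, $\mathbb{T}_kf$ applies $f$ to the first component of every pair. $\delta_{\mathcal{A}}:\mathbb{T}_k\mathcal{A}\to\mathbb{T}_k\mathbb{T}_k\mathcal{A}$ sends $[(a_1,p_1),\dots,(a_m,p_m)]$ to $[(s_1,p_1),\dots,(s_m,p_m)]$ where $s_i=[(a_1,p_1),\dots,(a_i,p_i)]$. A list in $(A\times[k])^{*}$ is basic if it has at most $n$ pairs and its pebble indices (second components) are pairwise distinct. The map $S_n$ from lists over $A\times[k]$ to lists of basic lists is defined by: $S_n(s)=[s]$ if $s$ is basic; otherwise $S_n(s)=[a];S_n(t)$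 where $s=a\cdot t$ and $a$ is the longest basic prefix of $s$ (here $\cdot$ is concatenation and $x;\ell$ / $\ell;x$ denote prepending/appending an element). For a list $s$ and $p\in[k]$, write $S_n(s)=t;[s']$ with $s'$ its last block, and set $\alpha_n(s,p)=t;[s']$ if $|s'|=n$ or $p$ occurs as a pebble index in $s'$, and $\alpha_n(s,p)=t$ otherwise. The relation $\approx_n$ on $\mathbb{T}_k\mathcal{A}$ is: $[s;(a,i)]\approx_n[t;(b,j)]$ iff $a=b$ and $\alpha_n(s,i)=\alpha_n(t,j)$. $\mathbb{H}_{n,k}\mathcal{A}=\mathbb{T}_k\mathcal{A}/{\approx_n}$, where a tuple of equivalence classes is in $R$ iff some choice of representatives is in $R^{\mathbb{T}_k\mathcal{A}}$; $q_n:\mathbb{T}_k\mathcal{A}\to\mathbb{H}_{n,k}\mathcal{A}$ is the quotient map, and $\mathbb{H}_{n,k}f$ is the map induced by $\mathbb{T}_kf$ on classes. The counit $\epsilon^{n,k}_{\mathcal{A}}:\mathbb{H}_{n,k}\mathcal{A}\to\mathcal{A}$ is determined by $\epsilon_{\mathcal{A}}=\epsilon^{n,k}_{\mathcal{A}}\circ q_n$, and the comultiplication $\delta^{n,k}_{\mathcal{A}}:\mathbb{H}_{n,k}\mathcal{A}\to\mathbb{H}_{n,k}\mathbb{H}_{n,k}\mathcal{A}$ is determined by $\delta^{n,k}_{\mathcal{A}}\circ q_n=q_n\circ\mathbb{T}_k q_n\circ\delta_{\mathcal{A}}$ (the outer $q_n$ being the quotient map for $\mathbb{H}_{n,k}\mathcal{A}$).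 *)

theory Defs
  imports Main "HOL-Library.Sublist"
begin

text \<open>sigma-structures: a universe and, for every relation symbol, a set of tuples (as lists).
  The signature is given by an arity function on a (finite) type of relation symbols.\<close>

record ('a, 'r) struc =
  univ :: "'a set"
  rels :: "'r \<Rightarrow> 'a list set"

definition is_struc :: "('r \<Rightarrow> nat) \<Rightarrow> ('a, 'r) struc \<Rightarrow> bool" where
  "is_struc ar A \<longleftrightarrow> (\<forall>R. \<forall>t\<in>rels A R. length t = ar R \<and> set t \<subseteq> univ A)"

definition is_hom :: "('a, 'r) struc \<Rightarrow> ('b, 'r) struc \<Rightarrow> ('a \<Rightarrow> 'b) \<Rightarrow> bool" where
  "is_hom A B f \<longleftrightarrow> f ` univ A \<subseteq> univ B \<and> (\<forall>R. \<forall>t\<in>rels A R. map f t \<in> rels B R)"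

type_synonym 'a plist = "('a \<times> nat) list"

definition eps_T :: "'a plist \<Rightarrow> 'a" where
  "eps_T s = fst (last s)"

definition pebble_ok :: "'a plist list \<Rightarrow> bool" where
  "pebble_ok ss \<longleftrightarrow> (\<forall>i<length ss. \<forall>j<length ss. prefix (ss!i) (ss!j) \<longrightarrow>
      (\<forall>u. prefix u (ss!j) \<and> strict_prefix (ss!i) u \<longrightarrow> snd (last u) \<noteq> snd (last (ss!i))))"

definition Tk :: "nat \<Rightarrow> ('a, 'r) struc \<Rightarrow> ('a plist, 'r) struc" where
  "Tk k A = \<lparr> univ = {s. s \<noteq> [] \<and> set s \<subseteq> univ A \<times> {1..k}},
              rels = (\<lambda>R. {ss. (\<forall>s\<in>set ss. s \<noteq> [] \<and> set s \<subseteq> univ A \<times> {1..k})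
                           \<and> (\<forall>s\<in>set ss. \<forall>t\<in>set ss. prefix s t \<or> prefix t s)
                           \<and> map eps_T ss \<in> rels A R
                           \<and> pebble_ok ss}) \<rparr>"

definition Tmap :: "('a \<Rightarrow> 'b) \<Rightarrow> 'a plist \<Rightarrow> 'b plist" where
  "Tmap f s = map (\<lambda>(a, p). (f a, p)) s"

definition delta_T :: "'a plist \<Rightarrow> 'a plist plist" where
  "delta_T s = map (\<lambda>i. (take (Suc i) s, snd (s!i))) [0..<length s]"

definition basic :: "nat \<Rightarrow> 'a plist \<Rightarrow> bool" where
  "basic n s \<longleftrightarrow> length s \<le> n \<and> distinct (map snd s)"

definition lbp :: "nat \<Rightarrow> 'a plist \<Rightarrow> nat" where
  "lbp n s = Max {m. m \<le> length s \<and> basic n (take m s)}"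

text \<open>S_n, computed with fuel (length of the list); for n \<ge> 1 the fuel never runs out
  before a basic list is reached, so this coincides with the recursive definition.\<close>
fun S_fuel :: "nat \<Rightarrow> nat \<Rightarrow> 'a plist \<Rightarrow> 'a plist list" where
  "S_fuel 0 n s = [s]"
| "S_fuel (Suc f) n s =
     (if basic n s then [s] else take (lbp n s) s # S_fuel f n (drop (lbp n s) s))"

definition S :: "nat \<Rightarrow> 'a plist \<Rightarrow> 'a plist list" where
  "S n s = S_fuel (length s) n s"

definition alpha :: "nat \<Rightarrow> 'a plist \<Rightarrow> nat \<Rightarrow> 'a plist list" where
  "alpha n s p = (let L = S n s; s' = last L in
                  if length s' = n \<or> p \<in> snd ` set s' then L else butlast L)"

definition approx :: "nat \<Rightarrow> 'a plist \<Rightarrow> 'a plist \<Rightarrow> bool" where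
  "approx n x y \<longleftrightarrow> fst (last x) = fst (last y)
       \<and> alpha n (butlast x) (snd (last x)) = alpha n (butlast y) (snd (last y))"

definition qcls :: "nat \<Rightarrow> nat \<Rightarrow> ('a, 'r) struc \<Rightarrow> 'a plist \<Rightarrow> 'a plist set" where
  "qcls n k A s = {t \<in> univ (Tk k A). approx n s t}"

definition H :: "nat \<Rightarrow> nat \<Rightarrow> ('a, 'r) struc \<Rightarrow> ('a plist set, 'r) struc" where
  "H n k A = \<lparr> univ = qcls n k A ` univ (Tk k A),
               rels = (\<lambda>R. map (qcls n k A) ` rels (Tk k A) R) \<rparr>"

definition Hmap :: "nat \<Rightarrow> nat \<Rightarrow> ('b, 'r) struc \<Rightarrow> ('a \<Rightarrow> 'b) \<Rightarrow> 'a plist set \<Rightarrow> 'b plist set" where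
  "Hmap n k B f c = qcls n k B (Tmap f (SOME s. s \<in> c))"

definition epsH :: "'a plist set \<Rightarrow> 'a" where
  "epsH c = eps_T (SOME s. s \<in> c)"

definition deltaH :: "nat \<Rightarrow> nat \<Rightarrow> ('a, 'r) struc \<Rightarrow> 'a plist set \<Rightarrow> 'a plist set plist set" where
  "deltaH n k A c = qcls n k (H n k A) (Tmap (qcls n k A) (delta_T (SOME s. s \<in> c)))"

end

theory Submission
  imports Defs
begin

definition relab :: "('a plist \<Rightarrow> 'b) \<Rightarrow> 'a plist \<Rightarrow> 'b plist" where
  "relab h x = map (\<lambda>i. (h (take (Suc i) x), snd (x ! i))) [0..<length x]"

lemma length_relab[simp]: "length (relab h x) = length x"
  by (simp add: relab_def)

lemma relab_nth[simp]: "i < length x \<Longrightarrow> relab h x ! i = (h (take (Suc i) x), snd (x ! i))"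
  by (simp add: relab_def)

lemma relab_Nil[simp]: "relab h [] = []"
  by (simp add: relab_def)

lemma map_snd_relab[simp]: "map snd (relab h x) = map snd x"
  by (rule nth_equalityI) auto

lemma take_relab: "take m (relab h x) = relab h (take m x)"
proof (rule nth_equalityI)
  show "length (take m (relab h x)) = length (relab h (take m x))" by simp
  fix i assume "i < length (take m (relab h x))"
  then have i: "i < m" "i < length x" by auto
  then show "take m (relab h x) ! i = relab h (take m x) ! i" by (simp add: min_def)
qed

lemma last_take_Suc: "i < length x \<Longrightarrow> last (take (Suc i) x) = x ! i"
  by (simp add: take_Suc_conv_app_nth)

lemma butlast_relab: "butlast (relab h x) = relab h (butlast x)"
  by (simp add: butlast_conv_take take_relab)

lemma relab_Nil_iff[simp]: "relab h x = [] \<longleftrightarrow> x = []"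
  by (metis length_relab length_0_conv)

lemma last_relab: assumes "x \<noteq> []" shows "last (relab h x) = (h x, snd (last x))"
proof -
  have l: "length x - 1 < length x" using assms by simp
  have t: "take (Suc (length x - 1)) x = x" using assms by simp
  have ne: "relab h x \<noteq> []" using assms by simp
  have "last (relab h x) = relab h x ! (length (relab h x) - 1)" by (rule last_conv_nth[OF ne])
  then have "last (relab h x) = (h (take (Suc (length x - 1)) x), snd (x ! (length x - 1)))" using l by simp
  then show ?thesis using t assms by (simp add: last_conv_nth)
qed

lemma snd_last_relab[simp]: "x \<noteq> [] \<Longrightarrow> snd (last (relab h x)) = snd (last x)"
  by (auto simp: last_relab)

lemma eps_relab: "x \<noteq> [] \<Longrightarrow> eps_T (relab h x) = h x"
  by (simp add: eps_T_def last_relab)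

lemma relab_cong: "(\<And>j. 0 < j \<Longrightarrow> j \<le> length x \<Longrightarrow> h (take j x) = h' (take j x)) \<Longrightarrow> relab h x = relab h' x"
  by (rule nth_equalityI) auto

lemma relab_relab: "relab g (relab h x) = relab (\<lambda>y. g (relab h y)) x"
  by (rule nth_equalityI) (auto simp: take_relab)

lemma Tmap_relab: "Tmap f x = relab (\<lambda>y. f (fst (last y))) x"
  by (rule nth_equalityI) (auto simp: Tmap_def last_take_Suc split: prod.splits)

lemma delta_relab: "Tmap q (delta_T x) = relab q x"
  by (rule nth_equalityI) (auto simp: Tmap_def delta_T_def split: prod.splits)

lemma relab_id: "relab (\<lambda>y. fst (last y)) x = x"
  by (rule nth_equalityI) (auto simp: last_take_Suc)

lemma prefix_take_eq: "prefix x y \<Longrightarrow> take (length x) y = x"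
  by (auto simp: prefix_def)

lemma prefix_relab: assumes "prefix x y" shows "prefix (relab h x) (relab h y)"
proof -
  have "relab h x = take (length x) (relab h y)" using prefix_take_eq[OF assms] by (simp add: take_relab)
  then show ?thesis by (metis take_is_prefix)
qed

lemma prefix_relab_rev:
  assumes "prefix x y \<or> prefix y x" "prefix (relab h x) (relab h y)"
  shows "prefix x y"
proof -
  have le: "length x \<le> length y" using prefix_length_le[OF assms(2)] by simp
  show ?thesis
  proof (cases "prefix x y")
    case False
    then have yx: "prefix y x" using assms(1) by blast
    then have "length y \<le> length x" by (rule prefix_length_le)
    then have "length y = length x" using le by simp
    then have "y = x" using prefix_take_eq[OF yx] by simp
    then show ?thesis by simp
  qed simp
qed

lemma pebble_ok_relab:
  assumes comp: "\<forall>s\<in>set ss. \<forall>t\<in>set ss. prefix s t \<or> prefix t s" and pk: "pebble_ok ss"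
    and ne: "\<forall>s\<in>set ss. s \<noteq> []"
  shows "pebble_ok (map (relab h) ss)"
  unfolding pebble_ok_def
proof (intro allI impI)
  fix i j u
  assume i0: "i < length (map (relab h) ss)" and j0: "j < length (map (relab h) ss)"
    and p: "prefix (map (relab h) ss ! i) (map (relab h) ss ! j)"
    and u: "prefix u (map (relab h) ss ! j) \<and> strict_prefix (map (relab h) ss ! i) u"
  have i: "i < length ss" and j: "j < length ss" using i0 j0 by auto
  let ?si = "ss!i" and ?sj = "ss!j"
  have c: "prefix ?si ?sj \<or> prefix ?sj ?si" using comp i j by (simp add: nth_mem)
  have p': "prefix (relab h ?si) (relab h ?sj)" using p i j by simp
  have pij: "prefix ?si ?sj" by (rule prefix_relab_rev[OF c p'])
  have u1: "prefix u (relab h ?sj)" and u2: "strict_prefix (relab h ?si) u" using u i j by auto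
  define u' where "u' = take (length u) ?sj"
  have uu: "u = relab h u'"
    using prefix_take_eq[OF u1] unfolding u'_def by (simp add: take_relab)
  have pu': "prefix u' ?sj" by (simp add: u'_def take_is_prefix)
  have lu: "length ?si < length u'"
    using prefix_length_less[OF u2] uu by simp
  have "prefix ?si u'" using prefix_length_prefix[OF pij pu'] lu by simp
  then have spu: "strict_prefix ?si u'" using lu by (auto simp: strict_prefix_def)
  have "snd (last u') \<noteq> snd (last ?si)" using pk i j pij pu' spu unfolding pebble_ok_def by blast
  moreover have "u' \<noteq> []" using lu by auto
  moreover have "?si \<noteq> []" using ne i by simp
  ultimately show "snd (last u) \<noteq> snd (last (map (relab h) ss ! i))" using uu i by simp
qed

fun chop :: "nat list \<Rightarrow> 'a list \<Rightarrow> 'a list list" where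
  "chop [] xs = []"
| "chop (l # ls) xs = take l xs # chop ls (drop l xs)"

lemma basic_cong: "map snd xs = map snd ys \<Longrightarrow> basic n xs = basic n ys"
  unfolding basic_def by (metis length_map)

lemma lbp_cong: "map snd xs = map snd ys \<Longrightarrow> lbp n xs = lbp n ys"
  unfolding lbp_def
proof -
  assume a: "map snd xs = map snd ys"
  have "\<And>m. basic n (take m xs) = basic n (take m ys)"
    by (rule basic_cong) (simp add: take_map[symmetric] a)
  moreover have "length xs = length ys" using a by (metis length_map)
  ultimately show "Max {m. m \<le> length xs \<and> basic n (take m xs)} = Max {m. m \<le> length ys \<and> basic n (take m ys)}"
    by simp
qed

lemma lbp_le: "lbp n s \<le> length s"
proof -
  have "finite {m. m \<le> length s \<and> basic n (take m s)}" by (rule finite_subset[of _ "{..length s}"]) auto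
  moreover have "0 \<in> {m. m \<le> length s \<and> basic n (take m s)}" by (simp add: basic_def)
  ultimately show ?thesis unfolding lbp_def by (metis (mono_tags, lifting) Max_in empty_iff mem_Collect_eq)
qed

lemma S_fuel_chop: "map snd xs = map snd ys \<Longrightarrow> S_fuel f n ys = chop (map length (S_fuel f n xs)) ys"
proof (induction f arbitrary: xs ys)
  case 0
  then show ?case by (simp, metis length_map take_all_iff order_refl)
next
  case (Suc f)
  have len: "length xs = length ys" using Suc.prems by (metis length_map)
  have b: "basic n xs = basic n ys" by (rule basic_cong[OF Suc.prems])
  have l: "lbp n xs = lbp n ys" by (rule lbp_cong[OF Suc.prems])
  have d: "map snd (drop (lbp n xs) xs) = map snd (drop (lbp n xs) ys)"
    by (simp add: drop_map[symmetric] Suc.prems)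
  show ?case
    using b l len lbp_le[of n xs] Suc.IH[OF d] by (auto simp: min_def)
qed

lemma concat_S_fuel: "concat (S_fuel f n s) = s"
  by (induction f arbitrary: s) auto

lemma S_fuel_ne: "S_fuel f n s \<noteq> []"
  by (cases f) auto

lemma chop_map_snd: "map snd xs = map snd ys \<Longrightarrow> map (map snd) (chop ls xs) = map (map snd) (chop ls ys)"
proof (induction ls arbitrary: xs ys)
  case Nil then show ?case by simp
next
  case (Cons l ls)
  have "map snd (drop l xs) = map snd (drop l ys)" by (simp add: drop_map[symmetric] Cons.prems)
  then show ?case using Cons by (simp add: take_map[symmetric])
qed

lemma butlast_chop: "butlast (chop ls xs) = chop (butlast ls) xs"
  by (induction ls arbitrary: xs) (auto, metis chop.simps(1) neq_Nil_conv chop.simps(2) list.distinct(1))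

lemma chop_take: "chop ls xs = chop ls (take (sum_list ls) xs)"
  by (induction ls arbitrary: xs) (auto simp: drop_take min_def)

lemma length_chop[simp]: "length (chop ls xs) = length ls"
  by (induction ls arbitrary: xs) auto

lemma alpha_chop:
  assumes a: "map snd xs = map snd ys"
  shows "alpha n ys p = chop (map length (alpha n xs p)) ys"
proof -
  have len: "length xs = length ys" using a by (metis length_map)
  let ?Lx = "S n xs" and ?Ly = "S n ys"
  have Ly: "?Ly = chop (map length ?Lx) ys" unfolding S_def using S_fuel_chop[OF a] len by simp
  have Lx: "?Lx = chop (map length ?Lx) xs" unfolding S_def using S_fuel_chop[of xs xs] by simp
  have ne: "?Lx \<noteq> []" by (simp add: S_def S_fuel_ne)
  have "map (map snd) ?Ly = map (map snd) ?Lx"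
    using Ly Lx chop_map_snd[OF a, of "map length ?Lx"] by simp
  then have ms: "map snd (last ?Ly) = map snd (last ?Lx)"
    using ne by (metis last_map map_is_Nil_conv)
  then have c: "(length (last ?Ly) = n \<or> p \<in> snd ` set (last ?Ly)) = (length (last ?Lx) = n \<or> p \<in> snd ` set (last ?Lx))"
    by (metis length_map list.set_map)
  show ?thesis unfolding alpha_def Let_def
    using c Ly by (simp add: butlast_chop map_butlast)
qed

lemma concat_alpha: "take (sum_list (map length (alpha n xs p))) xs = concat (alpha n xs p)"
proof -
  let ?L = "S n xs"
  have ne: "?L \<noteq> []" by (simp add: S_def S_fuel_ne)
  have c: "concat ?L = xs" by (simp add: S_def concat_S_fuel)
  have "prefix (concat (alpha n xs p)) xs"
  proof -
    have "?L = butlast ?L @ [last ?L]" using ne by simp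
    then have "xs = concat (butlast ?L) @ last ?L" using c by (metis concat.simps concat_append append_Nil2)
    then show ?thesis unfolding alpha_def Let_def using c by (auto simp: prefix_def)
  qed
  then show ?thesis by (metis append_eq_conv_conj length_concat prefix_def)
qed

lemma approx_relab:
  assumes x: "x \<noteq> []" and y: "y \<noteq> []" and ap: "approx n x y" and h: "h x = h y"
  shows "approx n (relab h x) (relab h y)"
proof -
  let ?A = "alpha n (butlast x) (snd (last x))"
  have A: "?A = alpha n (butlast y) (snd (last y))" using ap by (simp add: approx_def)
  let ?m = "sum_list (map length ?A)"
  have ex: "alpha n (butlast (relab h x)) (snd (last (relab h x))) = chop (map length ?A) (relab h (concat ?A))"
    by (simp add: snd_last_relab[OF x] butlast_relab alpha_chop[of "butlast x" "relab h (butlast x)"] chop_take[of _ "relab h (butlast x)"] take_relab concat_alpha)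
  have ey: "alpha n (butlast (relab h y)) (snd (last (relab h y))) = chop (map length ?A) (relab h (concat ?A))"
    unfolding A
    by (simp add: snd_last_relab[OF y] butlast_relab alpha_chop[of "butlast y" "relab h (butlast y)"] chop_take[of _ "relab h (butlast y)"] take_relab concat_alpha)
  show ?thesis unfolding approx_def using ex ey x y h by (simp add: last_relab)
qed



lemma univ_Tk: "s \<in> univ (Tk k A) \<longleftrightarrow> s \<noteq> [] \<and> set s \<subseteq> univ A \<times> {1..k}"
  by (simp add: Tk_def)

lemma rels_Tk: "ss \<in> rels (Tk k A) R \<longleftrightarrow> (\<forall>s\<in>set ss. s \<noteq> [] \<and> set s \<subseteq> univ A \<times> {1..k})
                           \<and> (\<forall>s\<in>set ss. \<forall>t\<in>set ss. prefix s t \<or> prefix t s)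
                           \<and> map eps_T ss \<in> rels A R
                           \<and> pebble_ok ss"
  by (simp add: Tk_def)

lemma univ_H: "univ (H n k A) = qcls n k A ` univ (Tk k A)"
  by (simp add: H_def)

lemma rels_H: "rels (H n k A) R = map (qcls n k A) ` rels (Tk k A) R"
  by (simp add: H_def)

lemma qcls_eq: "approx n x y \<Longrightarrow> qcls n k A x = qcls n k A y"
  unfolding qcls_def approx_def by auto

lemma some_qcls:
  assumes "s \<in> univ (Tk k A)"
  shows "(SOME t. t \<in> qcls n k A s) \<in> univ (Tk k A) \<and> approx n s (SOME t. t \<in> qcls n k A s)"
proof -
  have "s \<in> qcls n k A s" using assms by (simp add: qcls_def approx_def)
  then have "(SOME t. t \<in> qcls n k A s) \<in> qcls n k A s" by (rule someI)
  then show ?thesis by (simp add: qcls_def)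
qed

lemma take_univ: "s \<in> univ (Tk k A) \<Longrightarrow> 0 < j \<Longrightarrow> take j s \<in> univ (Tk k A)"
  by (auto simp: univ_Tk dest: in_set_takeD)

lemma relab_univ:
  assumes "s \<in> univ (Tk k A)" "\<And>j. 0 < j \<Longrightarrow> j \<le> length s \<Longrightarrow> h (take j s) \<in> univ B"
  shows "relab h s \<in> univ (Tk k B)"
proof -
  have "relab h s \<noteq> []" using assms(1) by (simp add: univ_Tk)
  moreover have "set (relab h s) \<subseteq> univ B \<times> {1..k}"
  proof
    fix z assume "z \<in> set (relab h s)"
    then obtain i where i: "i < length s" "z = relab h s ! i" by (metis in_set_conv_nth length_relab)
    have "s ! i \<in> set s" using i by simp
    then have "snd (s ! i) \<in> {1..k}" using assms(1) by (auto simp: univ_Tk)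
    moreover have "h (take (Suc i) s) \<in> univ B" using assms(2) i by simp
    ultimately show "z \<in> univ B \<times> {1..k}" using i by simp
  qed
  ultimately show ?thesis by (simp add: univ_Tk)
qed

lemma Tmap_univ:
  assumes "s \<in> univ (Tk k A)" "f ` univ A \<subseteq> univ B"
  shows "Tmap f s \<in> univ (Tk k B)"
  unfolding Tmap_relab
proof (rule relab_univ[OF assms(1)])
  fix j assume j: "0 < j" "j \<le> length s"
  have "take j s \<noteq> []" using j assms(1) by (simp add: univ_Tk)
  then have "last (take j s) \<in> set s" by (meson last_in_set in_set_takeD)
  then have "fst (last (take j s)) \<in> univ A" using assms(1) unfolding univ_Tk by (metis SigmaE fst_conv subsetD)
  then show "f (fst (last (take j s))) \<in> univ B" using assms(2) by blast
qed

lemma D_univ: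
  assumes "s \<in> univ (Tk k A)"
  shows "relab (qcls n k A) s \<in> univ (Tk k (H n k A))"
  by (rule relab_univ[OF assms]) (simp add: univ_H take_univ[OF assms])

lemma relab_rels:
  assumes ss: "ss \<in> rels (Tk k A) R" and u: "\<And>s. s \<in> set ss \<Longrightarrow> relab h s \<in> univ (Tk k B)"
    and e: "map h ss \<in> rels B R"
  shows "map (relab h) ss \<in> rels (Tk k B) R"
proof -
  have ne: "\<forall>s\<in>set ss. s \<noteq> []" and comp: "\<forall>s\<in>set ss. \<forall>t\<in>set ss. prefix s t \<or> prefix t s"
    and pk: "pebble_ok ss" using ss by (auto simp: rels_Tk)
  have e1: "map eps_T (map (relab h) ss) = map h ss" using ne by (simp add: eps_relab)
  have A: "map eps_T (map (relab h) ss) \<in> rels B R" by (metis e1 e)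
  have "\<forall>s\<in>set (map (relab h) ss). s \<noteq> [] \<and> set s \<subseteq> univ B \<times> {1..k}"
    using u by (auto simp: univ_Tk)
  moreover have "\<forall>s\<in>set (map (relab h) ss). \<forall>t\<in>set (map (relab h) ss). prefix s t \<or> prefix t s"
    using comp prefix_relab by fastforce
  ultimately show ?thesis using pebble_ok_relab[OF comp pk ne, of h] A unfolding rels_Tk by blast
qed

lemma Hmap_qcls:
  assumes "s \<in> univ (Tk k A)"
  shows "Hmap n k B f (qcls n k A s) = qcls n k B (Tmap f s)"
proof -
  let ?t = "SOME t. t \<in> qcls n k A s"
  have t: "?t \<in> univ (Tk k A)" "approx n s ?t" using some_qcls[OF assms] by auto
  have "approx n (Tmap f ?t) (Tmap f s)" unfolding Tmap_relab
    by (rule approx_relab) (use t assms in \<open>auto simp: univ_Tk approx_def\<close>)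
  then show ?thesis unfolding Hmap_def by (rule qcls_eq)
qed

lemma epsH_qcls:
  assumes "s \<in> univ (Tk k A)"
  shows "epsH (qcls n k A s) = eps_T s"
  using some_qcls[OF assms] unfolding epsH_def approx_def eps_T_def by auto

lemma deltaH_qcls:
  assumes "s \<in> univ (Tk k A)"
  shows "deltaH n k A (qcls n k A s) = qcls n k (H n k A) (relab (qcls n k A) s)"
proof -
  let ?t = "SOME t. t \<in> qcls n k A s"
  have t: "?t \<in> univ (Tk k A)" "approx n s ?t" using some_qcls[OF assms] by auto
  have "approx n (relab (qcls n k A) ?t) (relab (qcls n k A) s)"
    by (rule approx_relab) (use t assms qcls_eq[of n ?t s k A] in \<open>auto simp: univ_Tk approx_def\<close>)
  then show ?thesis unfolding deltaH_def delta_relab by (rule qcls_eq)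
qed

lemma Tmap_id: "Tmap id s = s"
  by (simp add: Tmap_def case_prod_unfold)

lemma Tmap_comp: "Tmap g (Tmap f s) = Tmap (g \<circ> f) s"
  by (simp add: Tmap_def case_prod_unfold)

lemma eps_Tmap: "s \<noteq> [] \<Longrightarrow> eps_T (Tmap f s) = f (eps_T s)"
  by (simp add: Tmap_def eps_T_def last_map case_prod_unfold)


lemma c1: assumes "is_struc ar A" shows "is_struc ar (H n k A)"
  unfolding is_struc_def
proof (intro allI ballI conjI)
  fix R t assume "t \<in> rels (H n k A) R"
  then obtain ss where ss: "ss \<in> rels (Tk k A) R" "t = map (qcls n k A) ss" by (auto simp: rels_H)
  then have "map eps_T ss \<in> rels A R" by (simp add: rels_Tk)
  then have "length (map eps_T ss) = ar R" using assms unfolding is_struc_def by blast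
  then show "length t = ar R" using ss by simp
  have "set ss \<subseteq> univ (Tk k A)" using ss by (auto simp: rels_Tk univ_Tk)
  then show "set t \<subseteq> univ (H n k A)" using ss by (auto simp: univ_H)
qed

lemma c2: assumes "is_hom A B f"
  shows "is_hom (H n k A) (H n k B) (Hmap n k B f)"
  unfolding is_hom_def
proof (intro conjI allI ballI)
  have fu: "f ` univ A \<subseteq> univ B" using assms by (simp add: is_hom_def)
  show "Hmap n k B f ` univ (H n k A) \<subseteq> univ (H n k B)"
  proof
    fix c assume "c \<in> Hmap n k B f ` univ (H n k A)"
    then obtain s where s: "s \<in> univ (Tk k A)" "c = Hmap n k B f (qcls n k A s)" by (auto simp: univ_H)
    then show "c \<in> univ (H n k B)" using Tmap_univ[OF s(1) fu] by (simp add: univ_H Hmap_qcls[OF s(1)])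
  qed
  fix R t assume "t \<in> rels (H n k A) R"
  then obtain ss where ss: "ss \<in> rels (Tk k A) R" "t = map (qcls n k A) ss" by (auto simp: rels_H)
  have su: "set ss \<subseteq> univ (Tk k A)" using ss by (auto simp: rels_Tk univ_Tk)
  have e: "map (Hmap n k B f) t = map (qcls n k B) (map (Tmap f) ss)"
    using ss su by (auto simp: Hmap_qcls)
  have ne: "\<forall>s\<in>set ss. s \<noteq> []" using su by (auto simp: univ_Tk)
  have "map eps_T ss \<in> rels A R" using ss by (simp add: rels_Tk)
  then have "map f (map eps_T ss) \<in> rels B R" using assms unfolding is_hom_def by blast
  moreover have "map f (map eps_T ss) = map (\<lambda>y. f (fst (last y))) ss" by (simp add: eps_T_def)
  ultimately have r: "map (\<lambda>y. f (fst (last y))) ss \<in> rels B R" by metis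
  have "map (Tmap f) ss \<in> rels (Tk k B) R"
    unfolding Tmap_relab
    by (rule relab_rels[OF ss(1) _ r]) (metis Tmap_relab Tmap_univ fu su subsetD)
  then show "map (Hmap n k B f) t \<in> rels (H n k B) R" unfolding e rels_H by blast
qed

lemma c5: "is_hom (H n k A) A epsH"
  unfolding is_hom_def
proof (intro conjI allI ballI)
  show "epsH ` univ (H n k A) \<subseteq> univ A"
  proof
    fix c assume "c \<in> epsH ` univ (H n k A)"
    then obtain s where s: "s \<in> univ (Tk k A)" "c = epsH (qcls n k A s)" by (auto simp: univ_H)
    have "last s \<in> set s" using s by (simp add: univ_Tk)
    then have "eps_T s \<in> univ A" using s unfolding univ_Tk eps_T_def by (metis SigmaE fst_conv subsetD)
    then show "c \<in> univ A" using s epsH_qcls by metis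
  qed
  fix R t assume "t \<in> rels (H n k A) R"
  then obtain ss where ss: "ss \<in> rels (Tk k A) R" "t = map (qcls n k A) ss" by (auto simp: rels_H)
  have su: "set ss \<subseteq> univ (Tk k A)" using ss by (auto simp: rels_Tk univ_Tk)
  have "map epsH t = map eps_T ss" using ss su by (auto simp: epsH_qcls)
  moreover have "map eps_T ss \<in> rels A R" using ss(1) by (simp add: rels_Tk)
  ultimately show "map epsH t \<in> rels A R" by metis
qed

lemma c7: "is_hom (H n k A) (H n k (H n k A)) (deltaH n k A)"
  unfolding is_hom_def
proof (intro conjI allI ballI)
  show "deltaH n k A ` univ (H n k A) \<subseteq> univ (H n k (H n k A))"
  proof
    fix c assume "c \<in> deltaH n k A ` univ (H n k A)"
    then obtain s where s: "s \<in> univ (Tk k A)" "c = deltaH n k A (qcls n k A s)" by (auto simp: univ_H)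
    then show "c \<in> univ (H n k (H n k A))" using deltaH_qcls[OF s(1)] D_univ[OF s(1)]
      by (simp add: univ_H[of n k "H n k A"])
  qed
  fix R t assume "t \<in> rels (H n k A) R"
  then obtain ss where ss: "ss \<in> rels (Tk k A) R" "t = map (qcls n k A) ss" by (auto simp: rels_H)
  have su: "set ss \<subseteq> univ (Tk k A)" using ss by (auto simp: rels_Tk univ_Tk)
  have e: "map (deltaH n k A) t = map (qcls n k (H n k A)) (map (relab (qcls n k A)) ss)"
    using ss su by (auto simp: deltaH_qcls)
  have r: "map (qcls n k A) ss \<in> rels (H n k A) R" using ss by (auto simp: rels_H)
  have "map (relab (qcls n k A)) ss \<in> rels (Tk k (H n k A)) R"
    by (rule relab_rels[OF ss(1) _ r]) (use D_univ su in blast)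
  then show "map (deltaH n k A) t \<in> rels (H n k (H n k A)) R" unfolding e rels_H[of n k "H n k A"] by blast
qed

lemma nat_delta:
  assumes s: "s \<in> univ (Tk k A)" and fu: "f ` univ A \<subseteq> univ B"
  shows "deltaH n k B (Hmap n k B f (qcls n k A s))
       = Hmap n k (H n k B) (Hmap n k B f) (deltaH n k A (qcls n k A s))"
proof -
  have L: "deltaH n k B (Hmap n k B f (qcls n k A s)) = qcls n k (H n k B) (relab (qcls n k B) (Tmap f s))"
    by (simp add: Hmap_qcls[OF s] deltaH_qcls[OF Tmap_univ[OF s fu]])
  have R: "Hmap n k (H n k B) (Hmap n k B f) (deltaH n k A (qcls n k A s))
      = qcls n k (H n k B) (Tmap (Hmap n k B f) (relab (qcls n k A) s))"
    by (simp add: deltaH_qcls[OF s] Hmap_qcls[OF D_univ[OF s]])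
  have "relab (qcls n k B) (Tmap f s) = Tmap (Hmap n k B f) (relab (qcls n k A) s)"
    unfolding Tmap_relab relab_relab
  proof (rule relab_cong)
    fix j assume j: "0 < j" "j \<le> length s"
    have tj: "take j s \<in> univ (Tk k A)" using take_univ[OF s j(1)] .
    then have ne: "take j s \<noteq> []" by (simp add: univ_Tk)
    show "qcls n k B (relab (\<lambda>y. f (fst (last y))) (take j s)) =
          Hmap n k B f (fst (last (relab (qcls n k A) (take j s))))"
      using ne by (simp add: Hmap_qcls[OF tj] last_relab Tmap_relab)
  qed
  then show ?thesis using L R by simp
qed

lemma counit2:
  assumes s: "s \<in> univ (Tk k A)"
  shows "Hmap n k A epsH (deltaH n k A (qcls n k A s)) = qcls n k A s"
proof -
  have "Hmap n k A epsH (deltaH n k A (qcls n k A s)) = qcls n k A (Tmap epsH (relab (qcls n k A) s))"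
    by (simp add: deltaH_qcls[OF s] Hmap_qcls[OF D_univ[OF s]])
  also have "Tmap epsH (relab (qcls n k A) s) = s"
    unfolding Tmap_relab relab_relab
  proof -
    have "relab (\<lambda>y. epsH (fst (last (relab (qcls n k A) y)))) s = relab (\<lambda>y. fst (last y)) s"
    proof (rule relab_cong)
      fix j assume j: "0 < j" "j \<le> length s"
      have tj: "take j s \<in> univ (Tk k A)" using take_univ[OF s j(1)] .
      then have ne: "take j s \<noteq> []" by (simp add: univ_Tk)
      show "epsH (fst (last (relab (qcls n k A) (take j s)))) = fst (last (take j s))"
        using ne by (simp add: epsH_qcls[OF tj] last_relab eps_T_def)
    qed
    then show "relab (\<lambda>y. epsH (fst (last (relab (qcls n k A) y)))) s = s" by (simp add: relab_id)
  qed
  finally show ?thesis .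
qed

lemma coassoc:
  assumes s: "s \<in> univ (Tk k A)"
  shows "deltaH n k (H n k A) (deltaH n k A (qcls n k A s))
       = Hmap n k (H n k (H n k A)) (deltaH n k A) (deltaH n k A (qcls n k A s))"
proof -
  have L: "deltaH n k (H n k A) (deltaH n k A (qcls n k A s))
     = qcls n k (H n k (H n k A)) (relab (qcls n k (H n k A)) (relab (qcls n k A) s))"
    by (simp add: deltaH_qcls[OF s] deltaH_qcls[OF D_univ[OF s]])
  have R: "Hmap n k (H n k (H n k A)) (deltaH n k A) (deltaH n k A (qcls n k A s))
     = qcls n k (H n k (H n k A)) (Tmap (deltaH n k A) (relab (qcls n k A) s))"
    by (simp add: deltaH_qcls[OF s] Hmap_qcls[OF D_univ[OF s]])
  have "relab (qcls n k (H n k A)) (relab (qcls n k A) s) = Tmap (deltaH n k A) (relab (qcls n k A) s)"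
    unfolding Tmap_relab relab_relab
  proof (rule relab_cong)
    fix j assume j: "0 < j" "j \<le> length s"
    have tj: "take j s \<in> univ (Tk k A)" using take_univ[OF s j(1)] .
    then have ne: "take j s \<noteq> []" by (simp add: univ_Tk)
    show "qcls n k (H n k A) (relab (qcls n k A) (take j s)) =
          deltaH n k A (fst (last (relab (qcls n k A) (take j s))))"
      using ne by (simp add: deltaH_qcls[OF tj] last_relab)
  qed
  then show ?thesis using L R by simp
qed

theorem theorem3p12:
  fixes ar :: "'r \<Rightarrow> nat" and n k :: nat
  assumes "finite (UNIV :: 'r set)" and "1 \<le> n" and "n \<le> k"
  shows
  "(\<forall>A :: ('a, 'r) struc. is_struc ar A \<longrightarrow> is_struc ar (H n k A))
 \<and> (\<forall>(A :: ('a, 'r) struc) (B :: ('b, 'r) struc) f.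
      is_struc ar A \<and> is_struc ar B \<and> is_hom A B f \<longrightarrow>
        is_hom (H n k A) (H n k B) (Hmap n k B f)
        \<and> (\<forall>s\<in>univ (Tk k A). Hmap n k B f (qcls n k A s) = qcls n k B (Tmap f s)))
 \<and> (\<forall>A :: ('a, 'r) struc. is_struc ar A \<longrightarrow> (\<forall>c\<in>univ (H n k A). Hmap n k A id c = c))
 \<and> (\<forall>(A :: ('a, 'r) struc) (B :: ('b, 'r) struc) (C :: ('c, 'r) struc) f g.
      is_struc ar A \<and> is_struc ar B \<and> is_struc ar C \<and> is_hom A B f \<and> is_hom B C g \<longrightarrow>
        (\<forall>c\<in>univ (H n k A). Hmap n k C (g \<circ> f) c = Hmap n k C g (Hmap n k B f c)))
 \<and> (\<forall>A :: ('a, 'r) struc. is_struc ar A \<longrightarrow>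
      is_hom (H n k A) A epsH \<and> (\<forall>s\<in>univ (Tk k A). epsH (qcls n k A s) = eps_T s))
 \<and> (\<forall>(A :: ('a, 'r) struc) (B :: ('b, 'r) struc) f.
      is_struc ar A \<and> is_struc ar B \<and> is_hom A B f \<longrightarrow>
        (\<forall>c\<in>univ (H n k A). f (epsH c) = epsH (Hmap n k B f c)))
 \<and> (\<forall>A :: ('a, 'r) struc. is_struc ar A \<longrightarrow>
      is_hom (H n k A) (H n k (H n k A)) (deltaH n k A)
      \<and> (\<forall>s\<in>univ (Tk k A). deltaH n k A (qcls n k A s)
                            = qcls n k (H n k A) (Tmap (qcls n k A) (delta_T s))))
 \<and> (\<forall>(A :: ('a, 'r) struc) (B :: ('b, 'r) struc) f.
      is_struc ar A \<and> is_struc ar B \<and> is_hom A B f \<longrightarrow>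
        (\<forall>c\<in>univ (H n k A). deltaH n k B (Hmap n k B f c)
                             = Hmap n k (H n k B) (Hmap n k B f) (deltaH n k A c)))
 \<and> (\<forall>A :: ('a, 'r) struc. is_struc ar A \<longrightarrow>
      (\<forall>c\<in>univ (H n k A).
         epsH (deltaH n k A c) = c
       \<and> Hmap n k A epsH (deltaH n k A c) = c
       \<and> deltaH n k (H n k A) (deltaH n k A c)
           = Hmap n k (H n k (H n k A)) (deltaH n k A) (deltaH n k A c)))"
proof (intro conjI allI impI ballI)
  fix A :: "('a, 'r) struc" assume "is_struc ar A"
  then show "is_struc ar (H n k A)" by (rule c1)
next
  fix A :: "('a, 'r) struc" and B :: "('b, 'r) struc" and f
  assume "is_struc ar A \<and> is_struc ar B \<and> is_hom A B f"
  then show "is_hom (H n k A) (H n k B) (Hmap n k B f)" using c2 by blast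
next
  fix A :: "('a, 'r) struc" and B :: "('b, 'r) struc" and f s
  assume "s \<in> univ (Tk k A)"
  then show "Hmap n k B f (qcls n k A s) = qcls n k B (Tmap f s)" by (rule Hmap_qcls)
next
  fix A :: "('a, 'r) struc" and c assume "c \<in> univ (H n k A)"
  then obtain s where s: "s \<in> univ (Tk k A)" "c = qcls n k A s" by (auto simp: univ_H)
  then show "Hmap n k A id c = c" by (simp add: Hmap_qcls Tmap_id)
next
  fix A :: "('a, 'r) struc" and B :: "('b, 'r) struc" and C :: "('c, 'r) struc" and f g c
  assume h: "is_struc ar A \<and> is_struc ar B \<and> is_struc ar C \<and> is_hom A B f \<and> is_hom B C g"
    and "c \<in> univ (H n k A)"
  then obtain s where s: "s \<in> univ (Tk k A)" "c = qcls n k A s" by (auto simp: univ_H)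
  have fu: "f ` univ A \<subseteq> univ B" using h by (simp add: is_hom_def)
  show "Hmap n k C (g \<circ> f) c = Hmap n k C g (Hmap n k B f c)"
    using s by (simp add: Hmap_qcls[OF s(1)] Hmap_qcls[OF Tmap_univ[OF s(1) fu]] Tmap_comp)
next
  fix A :: "('a, 'r) struc"
  show "is_hom (H n k A) A epsH" by (rule c5)
next
  fix A :: "('a, 'r) struc" and s assume "s \<in> univ (Tk k A)"
  then show "epsH (qcls n k A s) = eps_T s" by (rule epsH_qcls)
next
  fix A :: "('a, 'r) struc" and B :: "('b, 'r) struc" and f c
  assume h: "is_struc ar A \<and> is_struc ar B \<and> is_hom A B f" and "c \<in> univ (H n k A)"
  then obtain s where s: "s \<in> univ (Tk k A)" "c = qcls n k A s" by (auto simp: univ_H)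
  have fu: "f ` univ A \<subseteq> univ B" using h by (simp add: is_hom_def)
  have ne: "s \<noteq> []" using s by (simp add: univ_Tk)
  show "f (epsH c) = epsH (Hmap n k B f c)"
    using s by (simp add: Hmap_qcls[OF s(1)] epsH_qcls[OF s(1)] epsH_qcls[OF Tmap_univ[OF s(1) fu]] eps_Tmap[OF ne])
next
  fix A :: "('a, 'r) struc"
  show "is_hom (H n k A) (H n k (H n k A)) (deltaH n k A)" by (rule c7)
next
  fix A :: "('a, 'r) struc" and s assume "s \<in> univ (Tk k A)"
  then show "deltaH n k A (qcls n k A s) = qcls n k (H n k A) (Tmap (qcls n k A) (delta_T s))"
    by (simp add: deltaH_qcls delta_relab)
next
  fix A :: "('a, 'r) struc" and B :: "('b, 'r) struc" and f c
  assume h: "is_struc ar A \<and> is_struc ar B \<and> is_hom A B f" and "c \<in> univ (H n k A)"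
  then obtain s where s: "s \<in> univ (Tk k A)" "c = qcls n k A s" by (auto simp: univ_H)
  have fu: "f ` univ A \<subseteq> univ B" using h by (simp add: is_hom_def)
  show "deltaH n k B (Hmap n k B f c) = Hmap n k (H n k B) (Hmap n k B f) (deltaH n k A c)"
    using nat_delta[OF s(1) fu] s(2) by simp
next
  fix A :: "('a, 'r) struc" and c assume "c \<in> univ (H n k A)"
  then obtain s where s: "s \<in> univ (Tk k A)" "c = qcls n k A s" by (auto simp: univ_H)
  have ne: "s \<noteq> []" using s by (simp add: univ_Tk)
  show "epsH (deltaH n k A c) = c"
    using s by (simp add: deltaH_qcls[OF s(1)] epsH_qcls[OF D_univ[OF s(1)]] eps_relab[OF ne])
next
  fix A :: "('a, 'r) struc" and c assume "c \<in> univ (H n k A)"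
  then obtain s where s: "s \<in> univ (Tk k A)" "c = qcls n k A s" by (auto simp: univ_H)
  show "Hmap n k A epsH (deltaH n k A c) = c" using counit2[OF s(1)] s(2) by simp
next
  fix A :: "('a, 'r) struc" and c assume "c \<in> univ (H n k A)"
  then obtain s where s: "s \<in> univ (Tk k A)" "c = qcls n k A s" by (auto simp: univ_H)
  show "deltaH n k (H n k A) (deltaH n k A c) = Hmap n k (H n k (H n k A)) (deltaH n k A) (deltaH n k A c)"
    using coassoc[OF s(1)] s(2) by simp
qed

end
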